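(* Let $D\subset\mathbb{C}^n$ be a bounded $\alpha$-regular domain, $E\subset D$, and $\psi$ a bounded function on $E$ with $\sup_E\psi<0$. Then for all $z\in D$, \[ -\inf_{w\in E}\psi(w)\,\omega^*_\alpha(z,E,D)\le\omega^*_\alpha(z,E,D,\psi)\le-\sup_{w\in E}\psi(w)\,\omega^*_\alpha(z,E,D). \]
   Context: Fix a closed, strictly positive differential form $\alpha$ of bidegree $(n-1,n-1)$ with $C^1$ coefficients on an open subset of $\mathbb{C}^n$ containing all sets considered. Let $d=\partial+\bar\partial$, $d^c=(\bar\partial-\partial)/(4i)$. For an open set $\Omega$, $u\in L^1_{loc}(\Omega)$ is $\alpha$-subharmonic ($u\in\alpha\text{-}sh(\Omega)$) if it is strongly upper semicontinuous (upper semicontinuous, and for every $z^0\in\Omega$ and every set $A$ of full Lebesgue measure near $z^0$, $\limsup_{z\to z^0,z\in A}u(z)=u(z^0)$) and $\int u\,\alpha\wedge dd^c\omega\ge0$ for every nonnegative test function $\omega$; $u\equiv-\infty$ is also allowed. A bounded domain $D$ is $\alpha$-regular if there is $\rho\in\alpha\text{-}sh(D)$ with $\rho<0$ on $D$ and $\rho\to0$ at $\partial D$. $\mathcal U(E,D,\psi)$ is the class of $u\in\alpha\text{-}sh(D)$ with $u<0$ on $D$ and $u\le\psi$ on $E$; $\omega_\alpha(z,E,D,\psi)=\sup\{u(z):u\in\mathcal U(E,D,\psi)\}$ and $\omega^*_\alpha(z,E,D,\psi)=\limsup_{w\to z}\omega_\alpha(w,E,D,\psi)$. The unweighted $\alpha$-subharmonic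 measure is $\omega^*_\alpha(z,E,D):=\omega^*_\alpha(z,E,D,-1)$ (i.e. with $\psi\equiv-1$). *)

theory Defs
  imports "HOL-Analysis.Analysis"
begin

definition px :: "'n::finite \<Rightarrow> (complex^'n \<Rightarrow> complex) \<Rightarrow> complex^'n \<Rightarrow> complex" where
  "px j f x = frechet_derivative f (at x) (axis j 1)"

definition py :: "'n::finite \<Rightarrow> (complex^'n \<Rightarrow> complex) \<Rightarrow> complex^'n \<Rightarrow> complex" where
  "py j f x = frechet_derivative f (at x) (axis j \<i>)"

definition dz :: "'n::finite \<Rightarrow> (complex^'n \<Rightarrow> complex) \<Rightarrow> complex^'n \<Rightarrow> complex" where
  "dz j f x = (px j f x - \<i> * py j f x) / 2"

definition dzb :: "'n::finite \<Rightarrow> (complex^'n \<Rightarrow> complex) \<Rightarrow> complex^'n \<Rightarrow> complex" where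
  "dzb j f x = (px j f x + \<i> * py j f x) / 2"

fun dderiv :: "'a::real_normed_vector list \<Rightarrow> ('a \<Rightarrow> 'b::real_normed_vector) \<Rightarrow> 'a \<Rightarrow> 'b" where
  "dderiv [] f = f"
| "dderiv (v # vs) f = (\<lambda>x. frechet_derivative (dderiv vs f) (at x) v)"

definition smooth_fun :: "('a::real_normed_vector \<Rightarrow> 'b::real_normed_vector) \<Rightarrow> bool" where
  "smooth_fun f \<longleftrightarrow> (\<forall>vs x. dderiv vs f differentiable (at x))"

definition nonneg_test_fun :: "(complex^'n::finite) set \<Rightarrow> (complex^'n \<Rightarrow> real) \<Rightarrow> bool" where
  "nonneg_test_fun \<Omega> \<omega> \<longleftrightarrow> smooth_fun \<omega> \<and> (\<forall>x. 0 \<le> \<omega> x) \<and>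
     compact (closure {x. \<omega> x \<noteq> 0}) \<and> closure {x. \<omega> x \<noteq> 0} \<subseteq> \<Omega>"

definition C1_on :: "(complex^'n::finite) set \<Rightarrow> (complex^'n \<Rightarrow> complex) \<Rightarrow> bool" where
  "C1_on U f \<longleftrightarrow> (\<forall>x\<in>U. f differentiable (at x)) \<and>
     (\<forall>v. continuous_on U (\<lambda>x. frechet_derivative f (at x) v))"

text \<open>An (n-1,n-1)-form alpha is represented by its coefficient matrix a j k w.r.t. the basis
  alpha_{jk} dual to i dz_j /\ dzbar_k (i.e. alpha_{jk} /\ i dz_l /\ dzbar_m = delta_{jl} delta_{km} dV).
  Then alpha /\ i b /\ bbar = (sum a_jk b_j cnj b_k) dV, and
  alpha /\ dd^c w is a positive constant multiple of (sum a_jk d_j dbar_k w) dV.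
  Strict positivity = the Hermitian matrix (a_jk) is positive definite;
  d alpha = 0 iff sum_j d_j a_jk = 0 for all k and sum_k dbar_k a_jk = 0 for all j.\<close>

definition alpha_form :: "(complex^'n::finite) set \<Rightarrow> ('n \<Rightarrow> 'n \<Rightarrow> complex^'n \<Rightarrow> complex) \<Rightarrow> bool" where
  "alpha_form U a \<longleftrightarrow> open U \<and>
     (\<forall>j k. C1_on U (a j k)) \<and>
     (\<forall>x\<in>U. \<forall>j k. a j k x = cnj (a k j x)) \<and>
     (\<forall>x\<in>U. \<forall>v::complex^'n. v \<noteq> 0 \<longrightarrow>
         0 < Re (\<Sum>j\<in>UNIV. \<Sum>k\<in>UNIV. a j k x * v$j * cnj (v$k))) \<and>
     (\<forall>x\<in>U. \<forall>k. (\<Sum>j\<in>UNIV. dz j (a j k) x) = 0) \<and>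
     (\<forall>x\<in>U. \<forall>j. (\<Sum>k\<in>UNIV. dzb k (a j k) x) = 0)"

definition alpha_ddc :: "('n::finite \<Rightarrow> 'n \<Rightarrow> complex^'n \<Rightarrow> complex) \<Rightarrow> (complex^'n \<Rightarrow> real) \<Rightarrow> complex^'n \<Rightarrow> real" where
  "alpha_ddc a \<omega> x = Re (\<Sum>j\<in>UNIV. \<Sum>k\<in>UNIV.
       a j k x * dz j (dzb k (\<lambda>y. complex_of_real (\<omega> y))) x)"

definition loc_integrable :: "(complex^'n::finite) set \<Rightarrow> (complex^'n \<Rightarrow> ereal) \<Rightarrow> bool" where
  "loc_integrable \<Omega> u \<longleftrightarrow> (\<forall>K. compact K \<and> K \<subseteq> \<Omega> \<longrightarrow>
      (AE x in lborel. x \<in> K \<longrightarrow> \<bar>u x\<bar> \<noteq> \<infinity>) \<and>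
      set_integrable lborel K (\<lambda>x. real_of_ereal (u x)))"

definition strongly_usc :: "(complex^'n::finite) set \<Rightarrow> (complex^'n \<Rightarrow> ereal) \<Rightarrow> bool" where
  "strongly_usc \<Omega> u \<longleftrightarrow> (\<forall>z0\<in>\<Omega>. Limsup (at z0) u \<le> u z0 \<and>
      (\<forall>A. (\<exists>r>0. ball z0 r - A \<in> null_sets lebesgue) \<longrightarrow> Limsup (at z0 within A) u = u z0))"

definition alpha_sh :: "('n::finite \<Rightarrow> 'n \<Rightarrow> complex^'n \<Rightarrow> complex) \<Rightarrow> (complex^'n) set \<Rightarrow> (complex^'n \<Rightarrow> ereal) \<Rightarrow> bool" where
  "alpha_sh a \<Omega> u \<longleftrightarrow> (\<forall>x\<in>\<Omega>. u x = -\<infinity>) \<or>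
     (loc_integrable \<Omega> u \<and> (\<forall>x\<in>\<Omega>. u x < \<infinity>) \<and> strongly_usc \<Omega> u \<and>
      (\<forall>\<omega>. nonneg_test_fun \<Omega> \<omega> \<longrightarrow>
          0 \<le> (\<integral>x. real_of_ereal (u x) * alpha_ddc a \<omega> x \<partial>lborel)))"

definition alpha_regular :: "('n::finite \<Rightarrow> 'n \<Rightarrow> complex^'n \<Rightarrow> complex) \<Rightarrow> (complex^'n) set \<Rightarrow> bool" where
  "alpha_regular a D \<longleftrightarrow> open D \<and> connected D \<and> bounded D \<and>
     (\<exists>\<rho>. alpha_sh a D \<rho> \<and> (\<forall>z\<in>D. \<rho> z < 0) \<and>
          (\<forall>\<xi>\<in>frontier D. (\<rho> \<longlongrightarrow> 0) (at \<xi> within D)))"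

definition UU :: "('n::finite \<Rightarrow> 'n \<Rightarrow> complex^'n \<Rightarrow> complex) \<Rightarrow> (complex^'n) set \<Rightarrow> (complex^'n) set
    \<Rightarrow> (complex^'n \<Rightarrow> real) \<Rightarrow> (complex^'n \<Rightarrow> ereal) set" where
  "UU a E D \<psi> = {u. alpha_sh a D u \<and> (\<forall>z\<in>D. u z < 0) \<and> (\<forall>z\<in>E. u z \<le> ereal (\<psi> z))}"

definition omega_alpha where
  "omega_alpha a E D \<psi> z = (SUP u\<in>UU a E D \<psi>. u z)"

definition omega_alpha_star where
  "omega_alpha_star a E D \<psi> z = sup (omega_alpha a E D \<psi> z) (Limsup (at z) (omega_alpha a E D \<psi>))"

end

theory Submission
  imports Defs
begin

lemma Limsup_cmult_pos:
  fixes f :: "'a \<Rightarrow> ereal"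
  assumes "(c::real) > 0"
  shows "Limsup F (\<lambda>x. ereal c * f x) = ereal c * Limsup F f"
proof (cases "F = bot")
  case True
  then show ?thesis using assms by (simp add: bot_ereal_def)
next
  case False
  then show ?thesis by (rule Limsup_ereal_mult_left) (use assms in auto)
qed

lemma real_of_ereal_cmult: "real_of_ereal (ereal c * x) = c * real_of_ereal x"
  by (cases x) auto

lemma ereal_cmult_eq_inf: "(c::real) > 0 \<Longrightarrow> (\<bar>ereal c * x\<bar> \<noteq> \<infinity>) = (\<bar>x\<bar> \<noteq> \<infinity>)"
  by (cases x) auto

lemma alpha_sh_scale:
  assumes c: "(c::real) > 0" and u: "alpha_sh a \<Omega> u"
  shows "alpha_sh a \<Omega> (\<lambda>x. ereal c * u x)"
proof (cases "\<forall>x\<in>\<Omega>. u x = - \<infinity>")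
  case True
  then show ?thesis using c unfolding alpha_sh_def by auto
next
  case False
  then have li: "loc_integrable \<Omega> u" and lt: "\<forall>x\<in>\<Omega>. u x < \<infinity>" and su: "strongly_usc \<Omega> u"
    and int: "\<forall>\<omega>. nonneg_test_fun \<Omega> \<omega> \<longrightarrow> 0 \<le> (\<integral>x. real_of_ereal (u x) * alpha_ddc a \<omega> x \<partial>lborel)"
    using u unfolding alpha_sh_def by blast+
  have "loc_integrable \<Omega> (\<lambda>x. ereal c * u x)"
    using li c unfolding loc_integrable_def
    by (simp add: real_of_ereal_cmult ereal_cmult_eq_inf set_integrable_mult_right)
  moreover have "\<forall>x\<in>\<Omega>. ereal c * u x < \<infinity>"
  proof
    fix x assume "x \<in> \<Omega>"
    then have "u x < \<infinity>" using lt by blast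
    then show "ereal c * u x < \<infinity>" using c by (cases "u x") auto
  qed
  moreover have "strongly_usc \<Omega> (\<lambda>x. ereal c * u x)"
    using su c unfolding strongly_usc_def
    by (auto simp: Limsup_cmult_pos ereal_mult_left_mono)
  moreover have "\<forall>\<omega>. nonneg_test_fun \<Omega> \<omega> \<longrightarrow>
          0 \<le> (\<integral>x. real_of_ereal (ereal c * u x) * alpha_ddc a \<omega> x \<partial>lborel)"
    using int c by (simp add: real_of_ereal_cmult mult.assoc)
  ultimately show ?thesis unfolding alpha_sh_def by blast
qed

lemma ereal_cmult_sup: "(c::real) \<ge> 0 \<Longrightarrow> ereal c * sup a b = sup (ereal c * a) (ereal c * b)"
proof (cases "a \<le> b")
  case True
  assume "c \<ge> 0"
  then have "ereal c * a \<le> ereal c * b" using True by (simp add: ereal_mult_left_mono)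
  then show ?thesis using True by (simp add: sup_absorb2)
next
  case False
  assume "c \<ge> 0"
  then have "ereal c * b \<le> ereal c * a" using False by (simp add: ereal_mult_left_mono)
  then show ?thesis using False by (simp add: sup_absorb1)
qed

lemma star_scale_le:
  assumes "(c::real) > 0" and "\<And>x. ereal c * f x \<le> g x"
  shows "ereal c * sup (f z) (Limsup (at z) f) \<le> sup (g z) (Limsup (at z) g)"
proof -
  have "ereal c * sup (f z) (Limsup (at z) f) = sup (ereal c * f z) (ereal c * Limsup (at z) f)"
    using assms(1) by (intro ereal_cmult_sup) simp
  also have "ereal c * Limsup (at z) f = Limsup (at z) (\<lambda>x. ereal c * f x)"
    using assms(1) Limsup_cmult_pos[of c "at z" f] by simp
  also have "sup (ereal c * f z) (Limsup (at z) (\<lambda>x. ereal c * f x)) \<le> sup (g z) (Limsup (at z) g)"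
    by (intro sup_mono assms(2) Limsup_mono) (simp add: assms(2))
  finally show ?thesis .
qed

lemma star_scale_ge:
  assumes "(c::real) > 0" and "\<And>x. g x \<le> ereal c * f x"
  shows "sup (g z) (Limsup (at z) g) \<le> ereal c * sup (f z) (Limsup (at z) f)"
proof -
  have "ereal c * sup (f z) (Limsup (at z) f) = sup (ereal c * f z) (ereal c * Limsup (at z) f)"
    using assms(1) by (intro ereal_cmult_sup) simp
  also have "ereal c * Limsup (at z) f = Limsup (at z) (\<lambda>x. ereal c * f x)"
    using assms(1) Limsup_cmult_pos[of c "at z" f] by simp
  finally have e: "ereal c * sup (f z) (Limsup (at z) f) = sup (ereal c * f z) (Limsup (at z) (\<lambda>x. ereal c * f x))" .
  have "sup (g z) (Limsup (at z) g) \<le> sup (ereal c * f z) (Limsup (at z) (\<lambda>x. ereal c * f x))"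
    by (intro sup_mono assms(2) Limsup_mono) (simp add: assms(2))
  then show ?thesis using e by simp
qed

theorem lemma4p3:
  fixes U D E :: "(complex^'n::finite) set"
    and a :: "'n \<Rightarrow> 'n \<Rightarrow> complex^'n \<Rightarrow> complex"
    and \<psi> :: "complex^'n \<Rightarrow> real"
  assumes "alpha_form U a"
    and "D \<subseteq> U"
    and "alpha_regular a D"
    and "E \<subseteq> D" and "E \<noteq> {}"
    and "bounded (\<psi> ` E)"
    and "(SUP w\<in>E. \<psi> w) < 0"
    and "z \<in> D"
  shows "ereal (- (INF w\<in>E. \<psi> w)) * omega_alpha_star a E D (\<lambda>_. -1) z \<le> omega_alpha_star a E D \<psi> z
       \<and> omega_alpha_star a E D \<psi> z \<le> ereal (- (SUP w\<in>E. \<psi> w)) * omega_alpha_star a E D (\<lambda>_. -1) z"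
proof -
  have ba: "bdd_above (\<psi> ` E)" and bb: "bdd_below (\<psi> ` E)"
    using assms(6) by (auto simp: bounded_imp_bdd_above bounded_imp_bdd_below)
  define M where "M = - (INF w\<in>E. \<psi> w)"
  define m where "m = - (SUP w\<in>E. \<psi> w)"
  have m0: "m > 0" using assms(7) m_def by simp
  have "(INF w\<in>E. \<psi> w) \<le> (SUP w\<in>E. \<psi> w)"
  proof -
    obtain w where w: "w \<in> E" using assms(5) by blast
    show ?thesis using cINF_lower[OF bb w] cSUP_upper[OF w ba] by linarith
  qed
  then have M0: "M > 0" using m0 unfolding M_def m_def by simp
  have psiM: "- M \<le> \<psi> w" if "w \<in> E" for w
    using cINF_lower[OF bb that] unfolding M_def by simp
  have psim: "\<psi> w \<le> - m" if "w \<in> E" for w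
    using cSUP_upper[OF that ba] unfolding m_def by simp
  define f where "f = omega_alpha a E D (\<lambda>_. -1)"
  define g where "g = omega_alpha a E D \<psi>"
  have low: "ereal M * f x \<le> g x" for x
  proof -
    have each: "ereal M * u x \<le> g x" if u: "u \<in> UU a E D (\<lambda>_. -1)" for u
    proof -
      have "(\<lambda>y. ereal M * u y) \<in> UU a E D \<psi>"
      proof -
        have sh: "alpha_sh a D u" and neg: "\<forall>z\<in>D. u z < 0" and onE: "\<forall>z\<in>E. u z \<le> ereal (-1)"
          using u unfolding UU_def by auto
        have "alpha_sh a D (\<lambda>y. ereal M * u y)" using alpha_sh_scale[OF M0 sh] .
        moreover have "\<forall>z\<in>D. ereal M * u z < 0"
        proof
          fix y assume "y \<in> D"
          then have "u y < 0" using neg by blast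
          then show "ereal M * u y < 0" using M0 by (cases "u y") (auto simp: mult_pos_neg)
        qed
        moreover have "\<forall>z\<in>E. ereal M * u z \<le> ereal (\<psi> z)"
        proof
          fix y assume y: "y \<in> E"
          then have "u y \<le> ereal (-1)" using onE by blast
          then have "ereal M * u y \<le> ereal M * ereal (-1)" using M0 by (cases "u y") (use mult_left_mono[of _ "-1" M] in auto)
          also have "\<dots> = ereal (- M)" by simp
          also have "\<dots> \<le> ereal (\<psi> y)" using psiM[OF y] by simp
          finally show "ereal M * u y \<le> ereal (\<psi> y)" .
        qed
        ultimately show ?thesis unfolding UU_def by blast
      qed
      then show ?thesis unfolding g_def omega_alpha_def by (rule SUP_upper)
    qed
    show ?thesis
    proof (cases "UU a E D (\<lambda>_. -1) = {}")
      case True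
      then show ?thesis unfolding f_def omega_alpha_def using M0 by (simp add: bot_ereal_def)
    next
      case False
      have "ereal M * f x = (SUP u\<in>UU a E D (\<lambda>_. -1). ereal M * u x)"
        unfolding f_def omega_alpha_def using False M0 by (simp add: Sup_ereal_mult_left')
      also have "\<dots> \<le> g x" using each by (rule SUP_least)
      finally show ?thesis .
    qed
  qed
  have up: "g x \<le> ereal m * f x" for x
    unfolding g_def omega_alpha_def
  proof (rule SUP_least)
    fix v assume v: "v \<in> UU a E D \<psi>"
    have sh: "alpha_sh a D v" and neg: "\<forall>z\<in>D. v z < 0" and onE: "\<forall>z\<in>E. v z \<le> ereal (\<psi> z)"
      using v unfolding UU_def by auto
    have m1: "1 / m > 0" using m0 by simp
    define w where "w = (\<lambda>y. ereal (1/m) * v y)"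
    have "w \<in> UU a E D (\<lambda>_. -1)"
    proof -
      have "alpha_sh a D w" unfolding w_def using alpha_sh_scale[OF m1 sh] .
      moreover have "\<forall>z\<in>D. w z < 0"
      proof
        fix y assume "y \<in> D"
        then have "v y < 0" using neg by blast
        then show "w y < 0" using m1 unfolding w_def by (cases "v y") (auto simp: mult_pos_neg divide_neg_pos)
      qed
      moreover have "\<forall>z\<in>E. w z \<le> ereal (-1)"
      proof
        fix y assume y: "y \<in> E"
        then have "v y \<le> ereal (\<psi> y)" using onE by blast
        then have "w y \<le> ereal (1/m) * ereal (\<psi> y)" unfolding w_def using m1 by (cases "v y") (auto simp: divide_right_mono)
        also have "\<dots> = ereal (\<psi> y / m)" by simp
        also have "\<dots> \<le> ereal (-1)" using psim[OF y] m0 by (simp add: divide_le_eq)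
        finally show "w y \<le> ereal (-1)" .
      qed
      ultimately show ?thesis unfolding UU_def by blast
    qed
    then have "w x \<le> f x" unfolding f_def omega_alpha_def by (rule SUP_upper)
    then have "ereal m * w x \<le> ereal m * f x" using m0 by (intro ereal_mult_left_mono) auto
    moreover have "ereal m * w x = v x" unfolding w_def using m0 by (cases "v x") auto
    ultimately show "v x \<le> ereal m * f x" by simp
  qed
  have "ereal M * omega_alpha_star a E D (\<lambda>_. -1) z \<le> omega_alpha_star a E D \<psi> z"
    unfolding omega_alpha_star_def f_def[symmetric] g_def[symmetric]
    using M0 low by (intro star_scale_le) auto
  moreover have "omega_alpha_star a E D \<psi> z \<le> ereal m * omega_alpha_star a E D (\<lambda>_. -1) z"
    unfolding omega_alpha_star_def f_def[symmetric] g_def[symmetric]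
    using m0 up by (intro star_scale_ge) auto
  ultimately show ?thesis unfolding M_def m_def by blast
qed

end
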